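(* Let $d\ge1$, let $0\le\theta\le1$, and consider instances encoded as bipolar vectors $(x_1,\dots,x_d)\in\{1,-1\}^d$. Let a finite nonempty set of $k$ rules be given, each rule having as premise a nonempty conjunction of literals $x_i$ or $\neg x_i$ ($1\le i\le d$) and as conclusion the target class with a rule certainty factor $c\in(\theta,1]$. (An instance matches a rule if $x_i=1$ for each positive literal $x_i$ in its premise and $x_i=-1$ for each negated literal $\neg x_i$ in its premise.) Then there exists a multi-channel model with $k$ channels such that for every instance, the model output $M_{out}$ is $>\theta$ if the instance matches at least one of the given rules, and $M_{out}=0$ otherwise.
   Context: The CF-combining function: for a finite list of real arguments in $[-1,1]$, split them into the nonnegative ones $a_1,a_2,\dots$ and the negative ones $b_1,b_2,\dots$, and set $f_{\rm cf}=f^+_{\rm cf}(a_1,a_2,\dots)+f^-_{\rm cf}(b_1,b_2,\dots)$ where $f^+_{\rm cf}(a_1,a_2,\dots)=1-\prod_i(1-a_i)$ and $f^-_{\rm cf}(b_1,b_2,\dots)=-1+\prod_j(1+b_j)$ (empty products equal $1$). A multi-channel model with $k$ channels has, for each channel $j=1,\dots,k$, an output weight $u_j\in[0,1]$, a bias $w_{j0}\in[-1,1]$ and input weights $w_{j1},\dots,w_{jd}\in[-1,1]$. On input $(x_1,\dots,x_d)$, channel $j$ has activation $\phi_j=f_{\rm cf}(w_{j0},w_{j1}x_1,\dots,w_{jd}x_d)$ and influence $\psi_j=u_j\phi_j$, and the model output is $M_{out}=f_{\rm cf}(\psi_1,\dots,\psi_k)$. *)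

theory Defs
  imports Main "HOL.Real"
begin

definition f_cf_plus :: "real list \<Rightarrow> real" where
  "f_cf_plus as = 1 - prod_list (map (\<lambda>a. 1 - a) as)"

definition f_cf_minus :: "real list \<Rightarrow> real" where
  "f_cf_minus bs = -1 + prod_list (map (\<lambda>b. 1 + b) bs)"

definition f_cf :: "real list \<Rightarrow> real" where
  "f_cf xs = f_cf_plus (filter (\<lambda>a. 0 \<le> a) xs) + f_cf_minus (filter (\<lambda>b. b < 0) xs)"

text \<open>Multi-channel model with k channels over d inputs: channel j (j < k) has
  output weight u j, bias w j 0 and input weights w j 1, ..., w j d.
  Inputs x 1, ..., x d.\<close>
definition mc_valid :: "nat \<Rightarrow> nat \<Rightarrow> (nat \<Rightarrow> real) \<Rightarrow> (nat \<Rightarrow> nat \<Rightarrow> real) \<Rightarrow> bool" where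
  "mc_valid d k u w \<longleftrightarrow>
     (\<forall>j<k. 0 \<le> u j \<and> u j \<le> 1 \<and> (\<forall>i\<le>d. -1 \<le> w j i \<and> w j i \<le> 1))"

definition mc_activation :: "nat \<Rightarrow> (nat \<Rightarrow> nat \<Rightarrow> real) \<Rightarrow> nat \<Rightarrow> (nat \<Rightarrow> real) \<Rightarrow> real" where
  "mc_activation d w j x = f_cf (w j 0 # map (\<lambda>i. w j i * x i) [1..<Suc d])"

definition mc_out :: "nat \<Rightarrow> nat \<Rightarrow> (nat \<Rightarrow> real) \<Rightarrow> (nat \<Rightarrow> nat \<Rightarrow> real) \<Rightarrow> (nat \<Rightarrow> real) \<Rightarrow> real" where
  "mc_out d k u w x = f_cf (map (\<lambda>j. u j * mc_activation d w j x) [0..<k])"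

definition bipolar :: "nat \<Rightarrow> (nat \<Rightarrow> real) \<Rightarrow> bool" where
  "bipolar d x \<longleftrightarrow> (\<forall>i\<in>{1..d}. x i = 1 \<or> x i = -1)"

text \<open>A literal is (i, True) for x_i and (i, False) for \<not>x_i.\<close>
definition lit_ok :: "nat \<Rightarrow> nat \<times> bool \<Rightarrow> bool" where
  "lit_ok d l \<longleftrightarrow> 1 \<le> fst l \<and> fst l \<le> d"

definition matches :: "(nat \<times> bool) list \<Rightarrow> (nat \<Rightarrow> real) \<Rightarrow> bool" where
  "matches prem x \<longleftrightarrow> (\<forall>(i, b) \<in> set prem. x i = (if b then 1 else -1))"

end

theory Submission
  imports Defs
begin

definition wt :: "(nat \<times> bool) list \<Rightarrow> nat \<Rightarrow> real" where
  "wt prem i = (if (i, False) \<in> set prem then -1 else if (i, True) \<in> set prem then 1 else 0)"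

definition contra :: "(nat \<times> bool) list \<Rightarrow> bool" where
  "contra prem \<longleftrightarrow> (\<exists>i. (i, True) \<in> set prem \<and> (i, False) \<in> set prem)"

lemma prodB:
  assumes "set rest \<subseteq> {-1,0,1::real}"
  shows "prod_list (map (\<lambda>b. 1+b) (filter (\<lambda>b. b<0) rest)) = (if -1 \<in> set rest then 0 else 1)"
  using assms by (induction rest) auto

lemma act_gen:
  assumes "set rest \<subseteq> {-1,0,1::real}"
  shows "f_cf (1 # rest) = (if -1 \<in> set rest then 0 else 1)"
  using prodB[OF assms] by (simp add: f_cf_def f_cf_plus_def f_cf_minus_def)

lemma prod01:
  fixes l :: "real list"
  assumes "\<forall>a\<in>set l. 0 \<le> a \<and> a \<le> 1"
  shows "0 \<le> prod_list l \<and> prod_list l \<le> 1"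
  using assms by (induction l) (auto intro: mult_le_one)

lemma prod_le:
  fixes l :: "real list"
  assumes "\<forall>a\<in>set l. 0 \<le> a \<and> a \<le> 1" "a \<in> set l"
  shows "prod_list l \<le> a"
  using assms
proof (induction l)
  case Nil then show ?case by simp
next
  case (Cons b l)
  have pl: "0 \<le> prod_list l" "prod_list l \<le> 1" using Cons.prems(1)
    using prod01[of l] by auto
  show ?case
  proof (cases "a = b")
    case True
    then show ?thesis using pl Cons.prems(1) by (simp add: mult_left_le)
  next
    case False
    then have "a \<in> set l" using Cons.prems by simp
    then have "prod_list l \<le> a" using Cons by simp
    moreover have "b * prod_list l \<le> prod_list l" using Cons.prems(1) pl
      by (simp add: mult_left_le_one_le)
    ultimately show ?thesis by simp
  qed
qed

lemma prod1:
  fixes l :: "real list"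
  assumes "\<forall>a\<in>set l. a = 0"
  shows "prod_list (map (\<lambda>a. 1 - a) l) = 1"
  using assms by (induction l) auto

lemma out_pos:
  fixes l :: "real list"
  assumes "\<forall>a\<in>set l. 0 \<le> a \<and> a \<le> 1"
  shows "f_cf l = 1 - prod_list (map (\<lambda>a. 1 - a) l)"
proof -
  have "filter (\<lambda>a. 0 \<le> a) l = l" using assms by (simp add: filter_id_conv)
  moreover have "filter (\<lambda>b. b < 0) l = []" using assms by (auto simp: filter_empty_conv)
  ultimately show ?thesis by (simp add: f_cf_def f_cf_plus_def f_cf_minus_def)
qed

lemma activation:
  assumes bp: "bipolar d x" and lo: "\<forall>l \<in> set prem. lit_ok d l" and nc: "\<not> contra prem"
  shows "f_cf (1 # map (\<lambda>i. wt prem i * x i) [1..<Suc d]) = (if matches prem x then 1 else 0)"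
proof -
  let ?rest = "map (\<lambda>i. wt prem i * x i) [1..<Suc d]"
  have xi: "x i = 1 \<or> x i = -1" if "1 \<le> i" "i \<le> d" for i
    using bp that by (auto simp: bipolar_def)
  have sub: "set ?rest \<subseteq> {-1,0,1}"
  proof
    fix v assume "v \<in> set ?rest"
    then obtain i where "1 \<le> i" "i \<le> d" "v = wt prem i * x i" by auto
    then show "v \<in> {-1,0,1}" using xi[of i] by (auto simp: wt_def)
  qed
  have iff: "(-1 \<in> set ?rest) \<longleftrightarrow> \<not> matches prem x"
  proof
    assume "-1 \<in> set ?rest"
    then obtain i where i: "1 \<le> i" "i \<le> d" "wt prem i * x i = -1" by auto
    show "\<not> matches prem x"
    proof (cases "(i, False) \<in> set prem")
      case True
      then have "x i = 1" using i by (simp add: wt_def)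
      then show ?thesis using True unfolding matches_def by fastforce
    next
      case False
      then have T: "(i, True) \<in> set prem" using i by (auto simp: wt_def split: if_splits)
      then have "x i = -1" using i False by (simp add: wt_def)
      then show ?thesis using T unfolding matches_def by fastforce
    qed
  next
    assume "\<not> matches prem x"
    then obtain i b where ib: "(i, b) \<in> set prem" "x i \<noteq> (if b then 1 else -1)"
      unfolding matches_def by auto
    then have i: "1 \<le> i" "i \<le> d" using lo by (auto simp: lit_ok_def)
    have "wt prem i * x i = -1"
    proof (cases b)
      case True
      then have "(i, False) \<notin> set prem" using nc ib unfolding contra_def by auto
      then show ?thesis using True ib xi[OF i] by (auto simp: wt_def)
    next
      case False
      then show ?thesis using ib xi[OF i] by (auto simp: wt_def)
    qed
    moreover have "i \<in> set [1..<Suc d]" using i by auto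
    ultimately show "-1 \<in> set ?rest" by (metis (no_types, lifting) image_eqI set_map)
  qed
  show ?thesis using act_gen[OF sub] iff by simp
qed

lemma contra_nomatch:
  assumes "contra prem" shows "\<not> matches prem x"
proof
  assume m: "matches prem x"
  from assms obtain i where "(i, True) \<in> set prem" "(i, False) \<in> set prem" unfolding contra_def by blast
  then have "x i = 1" "x i = -1" using m unfolding matches_def by fastforce+
  then show False by simp
qed

theorem theorem2:
  fixes d :: nat and \<theta> :: real
    and rules :: "((nat \<times> bool) list \<times> real) list"
  assumes "1 \<le> d"
    and "0 \<le> \<theta>" and "\<theta> \<le> 1"
    and "rules \<noteq> []"
    and "\<forall>r \<in> set rules. fst r \<noteq> [] \<and> (\<forall>l \<in> set (fst r). lit_ok d l)
                          \<and> \<theta> < snd r \<and> snd r \<le> 1"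
  shows "\<exists>u w. mc_valid d (length rules) u w \<and>
           (\<forall>x. bipolar d x \<longrightarrow>
              ((\<exists>r \<in> set rules. matches (fst r) x) \<longrightarrow> mc_out d (length rules) u w x > \<theta>) \<and>
              (\<not> (\<exists>r \<in> set rules. matches (fst r) x) \<longrightarrow> mc_out d (length rules) u w x = 0))"
proof -
  define u where "u j = (if contra (fst (rules ! j)) then 0 else snd (rules ! j))" for j
  define w where "w j i = (if i = 0 then 1 else wt (fst (rules ! j)) i)" for j i
  let ?k = "length rules"
  have R: "fst (rules ! j) \<noteq> [] \<and> (\<forall>l \<in> set (fst (rules ! j)). lit_ok d l)
            \<and> \<theta> < snd (rules ! j) \<and> snd (rules ! j) \<le> 1" if "j < ?k" for j
    using assms(5) that by auto
  have valid: "mc_valid d ?k u w"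
    unfolding mc_valid_def u_def w_def wt_def using R assms(2) by fastforce
  have act: "mc_activation d w j x = (if matches (fst (rules ! j)) x then 1 else 0)"
    if "j < ?k" "bipolar d x" "\<not> contra (fst (rules ! j))" for j x
  proof -
    have "map (\<lambda>i. w j i * x i) [1..<Suc d] = map (\<lambda>i. wt (fst (rules ! j)) i * x i) [1..<Suc d]"
      by (auto simp: w_def)
    moreover have "w j 0 = 1" by (simp add: w_def)
    ultimately show ?thesis unfolding mc_activation_def
      using activation[OF that(2) _ that(3)] R[OF that(1)] by presburger
  qed
  have psi: "u j * mc_activation d w j x = (if matches (fst (rules ! j)) x then snd (rules ! j) else 0)"
    if "j < ?k" "bipolar d x" for j x
    using act[OF that] contra_nomatch[of "fst (rules ! j)" x] by (auto simp: u_def)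
  show ?thesis
  proof (intro exI conjI allI impI)
    show "mc_valid d ?k u w" by (rule valid)
  next
    fix x assume bp: "bipolar d x" and ex: "\<exists>r \<in> set rules. matches (fst r) x"
    let ?l = "map (\<lambda>j. u j * mc_activation d w j x) [0..<?k]"
    have eq: "?l = map (\<lambda>j. if matches (fst (rules ! j)) x then snd (rules ! j) else 0) [0..<?k]"
      using psi[OF _ bp] by auto
    have rng: "\<forall>a\<in>set ?l. 0 \<le> a \<and> a \<le> 1" unfolding eq using R assms(2) by fastforce
    from ex obtain j where j: "j < ?k" "matches (fst (rules ! j)) x"
      by (metis in_set_conv_nth)
    have "1 - snd (rules ! j) \<in> set (map (\<lambda>a. 1 - a) ?l)"
      unfolding eq using j by force
    moreover have "\<forall>a\<in>set (map (\<lambda>a. 1 - a) ?l). 0 \<le> a \<and> a \<le> 1" using rng by auto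
    ultimately have "prod_list (map (\<lambda>a. 1 - a) ?l) \<le> 1 - snd (rules ! j)"
      using prod_le by blast
    then show "mc_out d ?k u w x > \<theta>"
      unfolding mc_out_def using out_pos[OF rng] R[OF j(1)] by simp
  next
    fix x assume bp: "bipolar d x" and ex: "\<not> (\<exists>r \<in> set rules. matches (fst r) x)"
    let ?l = "map (\<lambda>j. u j * mc_activation d w j x) [0..<?k]"
    have z: "\<forall>a\<in>set ?l. a = 0" using psi[OF _ bp] ex by (auto simp: nth_mem)
    then have rng: "\<forall>a\<in>set ?l. 0 \<le> a \<and> a \<le> 1" by (metis order_refl zero_le_one)
    show "mc_out d ?k u w x = 0"
      unfolding mc_out_def using out_pos[OF rng] prod1[OF z] by simp
  qed
qed

end
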